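(* Let $R$ be a supertropical semiring, $V$ a free $R$-module with base $(\varepsilon_i\mid i\in I)$, $q:V\to R$ a quadratic form, and $x\in V\setminus\{0\}$ a $q$-minimal vector. Then $|\operatorname{supp}(x)|\le 2$ if $q(x)\in\mathcal T$, and $|\operatorname{supp}(x)|\le4$ if $q(x)\in\mathcal G$.
   Context: All semirings are commutative with $1$. A semiring $R$ is supertropical if $e:=1+1$ satisfies $e+e=e$ and, for all $x,y\in R$: if $ex\neq ey$ then $x+y\in\{x,y\}$, and if $ex=ey$ then $x+y=ey$. $\mathcal T=R\setminus eR$, $\mathcal G=eR\setminus\{0\}$. A quadratic form on an $R$-module $V$ is a map $q:V\to R$ with $q(ax)=a^2q(x)$ such that some symmetric bilinear $b$ (a companion) satisfies $q(x+y)=q(x)+q(y)+b(x,y)$. Every $R$-module $V$ (and $R$ itself) carries the minimal ordering $x\le y\iff\exists z:\ x+z=y$, a partial order; $x<y$ means $x\le y$, $x\ne y$. A vector $x\in V$ is $q$-minimal if there is no $x'<x$ with $q(x')=q(x)$. For $x=\sum_i x_i\varepsilon_i$, $\operatorname{supp}(x)=\{i\in I: x_i\neq0\}$. *)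

theory Defs
  imports Main
begin

definition ghost_unit :: "'a::comm_semiring_1" where
  "ghost_unit = 1 + 1"

definition supertropical :: "'a::comm_semiring_1 itself \<Rightarrow> bool" where
  "supertropical _ \<longleftrightarrow>
     (ghost_unit + ghost_unit = (ghost_unit :: 'a)) \<and>
     (\<forall>x y :: 'a. (ghost_unit * x \<noteq> ghost_unit * y \<longrightarrow> x + y \<in> {x, y}) \<and>
                  (ghost_unit * x = ghost_unit * y \<longrightarrow> x + y = ghost_unit * y))"

definition tangibles :: "'a::comm_semiring_1 set" where
  "tangibles = UNIV - range (\<lambda>r. ghost_unit * r)"

definition ghosts :: "'a::comm_semiring_1 set" where
  "ghosts = range (\<lambda>r. ghost_unit * r) - {0}"

(* The free R-module with base (eps_i | i in I), I = UNIV :: 'i set: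
   vectors x = sum_i x_i eps_i are the finitely supported coefficient functions. *)
definition free_mod :: "('i \<Rightarrow> 'a::comm_semiring_1) set" where
  "free_mod = {x. finite {i. x i \<noteq> 0}}"

definition vadd :: "('i \<Rightarrow> 'a::comm_semiring_1) \<Rightarrow> ('i \<Rightarrow> 'a) \<Rightarrow> ('i \<Rightarrow> 'a)" where
  "vadd x y = (\<lambda>i. x i + y i)"

definition vsmult :: "'a::comm_semiring_1 \<Rightarrow> ('i \<Rightarrow> 'a) \<Rightarrow> ('i \<Rightarrow> 'a)" where
  "vsmult a x = (\<lambda>i. a * x i)"

definition vzero :: "'i \<Rightarrow> 'a::comm_semiring_1" where
  "vzero = (\<lambda>i. 0)"

definition supp :: "('i \<Rightarrow> 'a::comm_semiring_1) \<Rightarrow> 'i set" where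
  "supp x = {i. x i \<noteq> 0}"

definition sym_bilinear :: "(('i \<Rightarrow> 'a::comm_semiring_1) \<Rightarrow> ('i \<Rightarrow> 'a) \<Rightarrow> 'a) \<Rightarrow> bool" where
  "sym_bilinear b \<longleftrightarrow>
     (\<forall>x\<in>free_mod. \<forall>y\<in>free_mod. b x y = b y x) \<and>
     (\<forall>x\<in>free_mod. \<forall>x'\<in>free_mod. \<forall>y\<in>free_mod. b (vadd x x') y = b x y + b x' y) \<and>
     (\<forall>a. \<forall>x\<in>free_mod. \<forall>y\<in>free_mod. b (vsmult a x) y = a * b x y)"

definition quadratic_form :: "(('i \<Rightarrow> 'a::comm_semiring_1) \<Rightarrow> 'a) \<Rightarrow> bool" where
  "quadratic_form q \<longleftrightarrow>
     (\<forall>a. \<forall>x\<in>free_mod. q (vsmult a x) = a ^ 2 * q x) \<and>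
     (\<exists>b. sym_bilinear b \<and>
          (\<forall>x\<in>free_mod. \<forall>y\<in>free_mod. q (vadd x y) = q x + q y + b x y))"

definition min_le :: "('i \<Rightarrow> 'a::comm_semiring_1) \<Rightarrow> ('i \<Rightarrow> 'a) \<Rightarrow> bool" where
  "min_le x y \<longleftrightarrow> (\<exists>z\<in>free_mod. vadd x z = y)"

definition q_minimal :: "(('i \<Rightarrow> 'a::comm_semiring_1) \<Rightarrow> 'a) \<Rightarrow> ('i \<Rightarrow> 'a) \<Rightarrow> bool" where
  "q_minimal q x \<longleftrightarrow>
     \<not> (\<exists>x'\<in>free_mod. min_le x' x \<and> x' \<noteq> x \<and> q x' = q x)"

end

theory Submission
  imports Defs
begin

section \<open>Supertropical arithmetic\<close>

lemma st_neq:
  assumes "supertropical TYPE('a::comm_semiring_1)" "ghost_unit * a \<noteq> ghost_unit * (b::'a)"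
  shows "a + b \<in> {a, b}"
  using assms unfolding supertropical_def by blast

lemma st_eq:
  assumes "supertropical TYPE('a::comm_semiring_1)" "ghost_unit * a = ghost_unit * (b::'a)"
  shows "a + b = ghost_unit * b"
  using assms unfolding supertropical_def by blast

lemma ee:
  assumes "supertropical TYPE('a::comm_semiring_1)"
  shows "ghost_unit * ghost_unit = (ghost_unit::'a)"
proof -
  have "ghost_unit * ghost_unit = (1 + 1) * (ghost_unit::'a)" by (simp add: ghost_unit_def)
  also have "\<dots> = ghost_unit + ghost_unit" by (simp only: distrib_right mult_1_left)
  also have "\<dots> = ghost_unit" using assms unfolding supertropical_def by blast
  finally show ?thesis .
qed

definition nle :: "'a::comm_semiring_1 \<Rightarrow> 'a \<Rightarrow> bool" where
  "nle a b \<longleftrightarrow> ghost_unit * a + ghost_unit * b = ghost_unit * b"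

lemma ee_a:
  assumes ST: "supertropical TYPE('a::comm_semiring_1)"
  shows "ghost_unit * (ghost_unit * a) = ghost_unit * (a::'a)"
proof -
  have "ghost_unit * (ghost_unit * a) = (ghost_unit * ghost_unit) * a" by (simp only: mult.assoc)
  also have "\<dots> = ghost_unit * a" by (simp only: ee[OF ST])
  finally show ?thesis .
qed

lemma ee_add:
  assumes ST: "supertropical TYPE('a::comm_semiring_1)"
  shows "ghost_unit * a + ghost_unit * a = ghost_unit * (a::'a)"
proof -
  have "ghost_unit * a + ghost_unit * a = (ghost_unit + ghost_unit) * a" by (simp only: distrib_right)
  also have "ghost_unit + ghost_unit = (ghost_unit::'a)" using ST unfolding supertropical_def by blast
  finally show ?thesis .
qed

lemma nle_total:
  assumes ST: "supertropical TYPE('a::comm_semiring_1)"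
  shows "nle a b \<or> nle b (a::'a)"
proof (cases "ghost_unit * a = ghost_unit * b")
  case True
  then show ?thesis unfolding nle_def using ee_add[OF ST, of b] by simp
next
  case False
  have "ghost_unit * (ghost_unit * a) \<noteq> ghost_unit * (ghost_unit * b)"
    using False by (simp add: ee_a[OF ST])
  from st_neq[OF ST this] show ?thesis unfolding nle_def by (auto simp: add.commute)
qed

lemma nle_trans:
  assumes "nle a b" "nle b (c::'a::comm_semiring_1)"
  shows "nle a c"
proof -
  have "ghost_unit * a + ghost_unit * c = ghost_unit * a + (ghost_unit * b + ghost_unit * c)"
    using assms(2) unfolding nle_def by simp
  also have "\<dots> = (ghost_unit * a + ghost_unit * b) + ghost_unit * c" by (simp only: add.assoc)
  also have "\<dots> = ghost_unit * c" using assms unfolding nle_def by simp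
  finally show ?thesis unfolding nle_def .
qed

lemma nle_refl_like:
  assumes ST: "supertropical TYPE('a::comm_semiring_1)"
  shows "nle a (a::'a)"
  using nle_total[OF ST] by blast

lemma lt_add:
  assumes ST: "supertropical TYPE('a::comm_semiring_1)"
    and "nle a b" "ghost_unit * a \<noteq> ghost_unit * (b::'a)"
  shows "a + b = b"
proof -
  have "a + b \<in> {a, b}" using st_neq[OF ST assms(3)] .
  moreover have "a + b \<noteq> a"
  proof
    assume "a + b = a"
    hence "ghost_unit * a = ghost_unit * (a + b)" by simp
    hence "ghost_unit * a = ghost_unit * a + ghost_unit * b"
      by (simp only: distrib_left)
    thus False using assms(2,3) unfolding nle_def by simp
  qed
  ultimately show ?thesis by blast
qed

lemma le_add_ghost:
  assumes ST: "supertropical TYPE('a::comm_semiring_1)"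
    and "nle a (b::'a)"
  shows "a + ghost_unit * b = ghost_unit * b"
proof -
  have eb: "ghost_unit * (ghost_unit * b) = ghost_unit * b" by (rule ee_a[OF ST])
  show ?thesis
  proof (cases "ghost_unit * a = ghost_unit * b")
    case True
    then show ?thesis using st_eq[OF ST, of a "ghost_unit * b"] eb by simp
  next
    case False
    have "nle a (ghost_unit * b)" using assms(2) eb unfolding nle_def by simp
    then show ?thesis using lt_add[OF ST, of a "ghost_unit * b"] False eb by simp
  qed
qed

lemma exists_max:
  assumes ST: "supertropical TYPE('a::comm_semiring_1)"
  shows "finite A \<Longrightarrow> A \<noteq> {} \<Longrightarrow> \<exists>k\<in>A. \<forall>j\<in>A. nle (F j) (F k :: 'a)"
proof (induction A rule: finite_ne_induct)
  case (singleton x)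
  then show ?case using nle_refl_like[OF ST] by auto
next
  case (insert x A)
  then obtain k where k: "k \<in> A" "\<forall>j\<in>A. nle (F j) (F k)" by blast
  show ?case
  proof (cases "nle (F x) (F k)")
    case True
    then show ?thesis using k by auto
  next
    case False
    hence "nle (F k) (F x)" using nle_total[OF ST] by blast
    then show ?thesis using k nle_trans nle_refl_like[OF ST] by blast
  qed
qed

lemma dom_sum_aux:
  assumes ST: "supertropical TYPE('a::comm_semiring_1)"
  shows "finite B \<Longrightarrow> (\<forall>j\<in>B. nle (F j) c \<and> ghost_unit * F j \<noteq> ghost_unit * c) \<Longrightarrow> c + sum F B = (c::'a)"
proof (induction B rule: finite_induct)
  case empty
  then show ?case by simp
next
  case (insert x B)
  have "c + sum F (insert x B) = (F x + c) + sum F B"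
    using insert by (simp add: ac_simps)
  also have "F x + c = c" using lt_add[OF ST] insert.prems by auto
  finally show ?case using insert by simp
qed

lemma dom_sum:
  assumes ST: "supertropical TYPE('a::comm_semiring_1)"
    and "finite A" "k \<in> A"
    and "\<forall>j\<in>A - {k}. nle (F j) (F k) \<and> ghost_unit * F j \<noteq> ghost_unit * (F k :: 'a)"
  shows "sum F A = F k"
proof -
  have "sum F A = F k + sum F (A - {k})"
    using assms(2,3) by (simp add: sum.remove)
  also have "\<dots> = F k" using dom_sum_aux[OF ST, of "A - {k}" F "F k"] assms(2,4) by simp
  finally show ?thesis .
qed

lemma tie_sum_aux:
  assumes ST: "supertropical TYPE('a::comm_semiring_1)"
  shows "finite B \<Longrightarrow> (\<forall>j\<in>B. nle (F j) c) \<Longrightarrow> ghost_unit * c + sum F B = ghost_unit * (c::'a)"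
proof (induction B rule: finite_induct)
  case empty
  then show ?case by simp
next
  case (insert x B)
  have "ghost_unit * c + sum F (insert x B) = (F x + ghost_unit * c) + sum F B"
    using insert by (simp add: ac_simps)
  also have "F x + ghost_unit * c = ghost_unit * c" using le_add_ghost[OF ST] insert.prems by auto
  finally show ?case using insert by simp
qed

lemma tie_sum:
  assumes ST: "supertropical TYPE('a::comm_semiring_1)"
    and "finite A" "k \<in> A" "l \<in> A" "k \<noteq> l"
    and "ghost_unit * F l = ghost_unit * (F k :: 'a)"
    and "\<forall>j\<in>A. nle (F j) (F k)"
  shows "sum F A = ghost_unit * F k"
proof -
  have "sum F A = F k + sum F (A - {k})"
    using assms(2,3) by (simp add: sum.remove)
  also have "sum F (A - {k}) = F l + sum F (A - {k} - {l})"
    using assms(2,4,5) by (simp add: sum.remove)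
  also have "F k + (F l + sum F (A - {k} - {l})) = (F l + F k) + sum F (A - {k} - {l})"
    by (simp add: ac_simps)
  also have "F l + F k = ghost_unit * F k" using st_eq[OF ST assms(6)] .
  also have "ghost_unit * F k + sum F (A - {k} - {l}) = ghost_unit * F k"
    using tie_sum_aux[OF ST, of "A - {k} - {l}" F "F k"] assms(2,7) by simp
  finally show ?thesis .
qed

section \<open>Expansion of the quadratic form\<close>

definition delta :: "'i \<Rightarrow> 'i \<Rightarrow> 'a::comm_semiring_1" where
  "delta k = (\<lambda>i. if i = k then 1 else 0)"

definition restr :: "('i \<Rightarrow> 'a::comm_semiring_1) \<Rightarrow> 'i set \<Rightarrow> 'i \<Rightarrow> 'a" where
  "restr x J = (\<lambda>i. if i \<in> J then x i else 0)"

definition pairs :: "'i set \<Rightarrow> 'i set set" where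
  "pairs J = {P. P \<subseteq> J \<and> P \<noteq> {} \<and> card P \<le> 2}"

definition qterm :: "(('i \<Rightarrow> 'a::comm_semiring_1) \<Rightarrow> 'a) \<Rightarrow> (('i \<Rightarrow> 'a) \<Rightarrow> ('i \<Rightarrow> 'a) \<Rightarrow> 'a)
   \<Rightarrow> ('i \<Rightarrow> 'a) \<Rightarrow> 'i set \<Rightarrow> 'a" where
  "qterm q b x P = (if card P = 1 then (x (the_elem P))^2 * q (delta (the_elem P))
     else (SOME v. \<exists>i j. P = {i, j} \<and> i \<noteq> j \<and> v = x i * x j * b (delta i) (delta j)))"

lemma delta_fm: "delta k \<in> free_mod"
  unfolding free_mod_def delta_def by simp

lemma vsmult_fm: "y \<in> free_mod \<Longrightarrow> vsmult c y \<in> free_mod"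
  unfolding free_mod_def vsmult_def by (auto elim: finite_subset[rotated])

lemma restr_fm: "finite J \<Longrightarrow> restr x J \<in> free_mod"
  unfolding free_mod_def restr_def by (auto elim: finite_subset[rotated])

lemma bsym: "sym_bilinear b \<Longrightarrow> x \<in> free_mod \<Longrightarrow> y \<in> free_mod \<Longrightarrow> b x y = b y x"
  unfolding sym_bilinear_def by (elim conjE ballE) auto

lemma bsmult: "sym_bilinear b \<Longrightarrow> x \<in> free_mod \<Longrightarrow> y \<in> free_mod \<Longrightarrow> b (vsmult a x) y = a * b x y"
  unfolding sym_bilinear_def by (elim conjE) (drule spec[of _ a], auto)

lemma badd: "sym_bilinear b \<Longrightarrow> x \<in> free_mod \<Longrightarrow> x' \<in> free_mod \<Longrightarrow> y \<in> free_mod \<Longrightarrow> b (vadd x x') y = b x y + b x' y"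
  unfolding sym_bilinear_def by (elim conjE) auto

lemma qsmult: "quadratic_form q \<Longrightarrow> x \<in> free_mod \<Longrightarrow> q (vsmult a x) = a ^ 2 * q x"
  unfolding quadratic_form_def by (elim conjE) (drule spec[of _ a], auto)

lemma qterm_single: "qterm q b x {i} = (x i)^2 * q (delta i)"
  unfolding qterm_def by simp

lemma qterm_pair:
  assumes "sym_bilinear b" "i \<noteq> j"
  shows "qterm q b x {i, j} = x i * x j * b (delta i) (delta j)"
proof -
  have c: "card {i, j} \<noteq> 1" using assms(2) by simp
  have sym: "b (delta j) (delta i) = b (delta i) (delta j)"
    using bsym[OF assms(1) delta_fm delta_fm] .
  have "(SOME v. \<exists>i' j'. {i, j} = {i', j'} \<and> i' \<noteq> j' \<and> v = x i' * x j' * b (delta i') (delta j'))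
        = x i * x j * b (delta i) (delta j)"
  proof (rule some_equality)
    show "\<exists>i' j'. {i, j} = {i', j'} \<and> i' \<noteq> j' \<and> x i * x j * b (delta i) (delta j) = x i' * x j' * b (delta i') (delta j')"
      using assms(2) by blast
  next
    fix v assume "\<exists>i' j'. {i, j} = {i', j'} \<and> i' \<noteq> j' \<and> v = x i' * x j' * b (delta i') (delta j')"
    then obtain i' j' where h: "{i, j} = {i', j'}" "v = x i' * x j' * b (delta i') (delta j')" by blast
    from h(1) have "(i' = i \<and> j' = j) \<or> (i' = j \<and> j' = i)" by (metis doubleton_eq_iff)
    then show "v = x i * x j * b (delta i) (delta j)" using h(2) sym by (auto simp: ac_simps)
  qed
  then show ?thesis unfolding qterm_def using c by simp
qed

lemma b_zero:
  fixes b :: "('i \<Rightarrow> 'a::comm_semiring_1) \<Rightarrow> ('i \<Rightarrow> 'a) \<Rightarrow> 'a"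
  assumes "sym_bilinear b" "y \<in> free_mod"
  shows "b vzero y = 0"
proof -
  have "vzero = vsmult 0 (vzero :: 'i \<Rightarrow> 'a)" unfolding vsmult_def vzero_def by simp
  moreover have "vzero \<in> (free_mod :: ('i \<Rightarrow> 'a) set)" unfolding free_mod_def vzero_def by simp
  ultimately show ?thesis using bsmult[OF assms(1) _ assms(2), of vzero 0] by simp
qed

lemma restr_insert:
  "k \<notin> J \<Longrightarrow> restr x (insert k J) = vadd (restr x J) (vsmult (x k) (delta k))"
  unfolding restr_def vadd_def vsmult_def delta_def by (rule ext) auto

lemma b_expand:
  assumes "sym_bilinear b" "y \<in> free_mod"
  shows "finite J \<Longrightarrow> b (restr x J) y = (\<Sum>i\<in>J. x i * b (delta i) y)"
proof (induction J rule: finite_induct)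
  case empty
  have "restr x {} = vzero" unfolding restr_def vzero_def by simp
  then show ?case using b_zero[OF assms] by simp
next
  case (insert k J)
  have "b (restr x (insert k J)) y = b (restr x J) y + b (vsmult (x k) (delta k)) y"
    unfolding restr_insert[OF insert(2)]
    using badd[OF assms(1) restr_fm[OF insert(1), of x] vsmult_fm[OF delta_fm, of "x k" k] assms(2)] .
  also have "b (vsmult (x k) (delta k)) y = x k * b (delta k) y"
    using bsmult[OF assms(1) delta_fm assms(2)] .
  finally show ?case using insert by (simp add: add.commute)
qed

lemma q_zero:
  fixes q :: "('i \<Rightarrow> 'a::comm_semiring_1) \<Rightarrow> 'a"
  assumes "quadratic_form q"
  shows "q vzero = 0"
proof -
  have "vzero = vsmult 0 (vzero :: 'i \<Rightarrow> 'a)" unfolding vsmult_def vzero_def by simp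
  moreover have "vzero \<in> (free_mod :: ('i \<Rightarrow> 'a) set)" unfolding free_mod_def vzero_def by simp
  ultimately show ?thesis using qsmult[OF assms(1), of vzero 0] by simp
qed

lemma pairs_insert:
  assumes "finite J" "k \<notin> J"
  shows "pairs (insert k J) = pairs J \<union> insert {k} ((\<lambda>i. {i, k}) ` J)"
proof
  show "pairs (insert k J) \<subseteq> pairs J \<union> insert {k} ((\<lambda>i. {i, k}) ` J)"
  proof
    fix P assume P: "P \<in> pairs (insert k J)"
    hence P1: "P \<subseteq> insert k J" "P \<noteq> {}" "card P \<le> 2" unfolding pairs_def by auto
    show "P \<in> pairs J \<union> insert {k} ((\<lambda>i. {i, k}) ` J)"
    proof (cases "k \<in> P")
      case False
      then show ?thesis using P1 unfolding pairs_def by auto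
    next
      case True
      have fin: "finite P" using P1(1) assms(1) finite_subset by blast
      have "card (P - {k}) \<le> 1" using P1(3) True fin by simp
      then consider "P - {k} = {}" | i where "P - {k} = {i}"
        by (metis card_0_eq card_1_singletonE fin finite_Diff le_Suc_eq One_nat_def le_zero_eq)
      then show ?thesis
      proof cases
        case 1 then have "P = {k}" using True by blast
        then show ?thesis by simp
      next
        case 2 then have "P = {i, k}" "i \<in> J" using True P1(1) by blast+
        then show ?thesis by blast
      qed
    qed
  qed
next
  show "pairs J \<union> insert {k} ((\<lambda>i. {i, k}) ` J) \<subseteq> pairs (insert k J)"
    unfolding pairs_def by (auto simp: card_insert_if card_le_Suc0_iff_eq)
qed

lemma pairs_finite: "finite J \<Longrightarrow> finite (pairs J)"
  unfolding pairs_def by (rule finite_subset[of _ "Pow J"]) auto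

lemma q_expand:
  assumes "quadratic_form q" "sym_bilinear b"
    and qb: "\<forall>x\<in>free_mod. \<forall>y\<in>free_mod. q (vadd x y) = q x + q y + b x y"
  shows "finite J \<Longrightarrow> q (restr x J) = sum (qterm q b x) (pairs J)"
proof (induction J rule: finite_induct)
  case empty
  have "restr x {} = vzero" unfolding restr_def vzero_def by simp
  moreover have "pairs {} = ({} :: 'i set set)" unfolding pairs_def by auto
  ultimately show ?case using q_zero[OF assms(1)] by (metis sum.empty)
next
  case (insert k J)
  let ?y = "vsmult (x k) (delta k)"
  have yfm: "?y \<in> free_mod" by (rule vsmult_fm[OF delta_fm])
  have "q (restr x (insert k J)) = q (restr x J) + q ?y + b (restr x J) ?y"
    unfolding restr_insert[OF insert(2)] using qb restr_fm[OF insert(1), of x] yfm by simp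
  also have "q ?y = (x k)^2 * q (delta k)"
    using qsmult[OF assms(1) delta_fm] .
  also have "b (restr x J) ?y = (\<Sum>i\<in>J. x i * b (delta i) ?y)"
    using b_expand[OF assms(2) yfm insert(1)] .
  also have "\<dots> = (\<Sum>i\<in>J. qterm q b x {i, k})"
  proof (rule sum.cong)
    fix i assume i: "i \<in> J"
    have "b (delta i) ?y = b ?y (delta i)" using bsym[OF assms(2) delta_fm yfm] .
    also have "\<dots> = x k * b (delta k) (delta i)" using bsmult[OF assms(2) delta_fm delta_fm] .
    also have "b (delta k) (delta i) = b (delta i) (delta k)" using bsym[OF assms(2) delta_fm delta_fm] .
    finally have "x i * b (delta i) ?y = x i * x k * b (delta i) (delta k)" by (simp add: ac_simps)
    moreover have "i \<noteq> k" using i insert(2) by blast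
    ultimately show "x i * b (delta i) ?y = qterm q b x {i, k}" using qterm_pair[OF assms(2)] by simp
  qed simp
  also have "(\<Sum>i\<in>J. qterm q b x {i, k}) = sum (qterm q b x) ((\<lambda>i. {i, k}) ` J)"
  proof -
    have "inj_on (\<lambda>i. {i, k}) J" using insert(2) unfolding inj_on_def by (metis doubleton_eq_iff)
    then show ?thesis by (simp add: sum.reindex)
  qed
  finally have A: "q (restr x (insert k J)) = sum (qterm q b x) (pairs J) + qterm q b x {k} + sum (qterm q b x) ((\<lambda>i. {i, k}) ` J)"
    using insert.IH by (simp add: qterm_single)
  have d1: "{k} \<notin> (\<lambda>i. {i, k}) ` J" using insert(2) by auto
  have d2: "pairs J \<inter> insert {k} ((\<lambda>i. {i, k}) ` J) = {}" using insert(2) unfolding pairs_def by auto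
  have "sum (qterm q b x) (pairs (insert k J)) = sum (qterm q b x) (pairs J) + sum (qterm q b x) (insert {k} ((\<lambda>i. {i, k}) ` J))"
    unfolding pairs_insert[OF insert(1,2)]
    by (rule sum.union_disjoint) (use insert(1) pairs_finite d2 in auto)
  also have "sum (qterm q b x) (insert {k} ((\<lambda>i. {i, k}) ` J)) = qterm q b x {k} + sum (qterm q b x) ((\<lambda>i. {i, k}) ` J)"
    using d1 insert(1) by simp
  finally show ?case using A by (simp add: ac_simps)
qed

lemma minimal_card:
  assumes "q_minimal q x" "x \<in> free_mod" "J \<subseteq> supp x" "q (restr x J) = q x"
  shows "card (supp x) \<le> card J"
proof -
  have fin: "finite (supp x)" using assms(2) unfolding free_mod_def supp_def by simp
  hence finJ: "finite J" using assms(3) finite_subset by blast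
  have "min_le (restr x J) x"
    unfolding min_le_def
  proof (intro bexI)
    show "vadd (restr x J) (restr x (supp x - J)) = x"
      unfolding vadd_def restr_def supp_def by (rule ext) auto
    show "restr x (supp x - J) \<in> free_mod" using fin restr_fm by blast
  qed
  hence "restr x J = x" using assms(1,4) restr_fm[OF finJ] unfolding q_minimal_def by blast
  hence eq: "restr x J = x" .
  have "supp x \<subseteq> J"
  proof
    fix i assume "i \<in> supp x"
    then have "x i \<noteq> 0" by (simp add: supp_def)
    moreover have "restr x J i = x i" using eq by simp
    ultimately show "i \<in> J" unfolding restr_def by (auto split: if_splits)
  qed
  then show ?thesis using finJ card_mono by blast
qed

theorem proposition6p4:
  fixes q :: "('i \<Rightarrow> 'a::comm_semiring_1) \<Rightarrow> 'a"
    and x :: "'i \<Rightarrow> 'a"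
  assumes "supertropical TYPE('a)"
    and "quadratic_form q"
    and "x \<in> free_mod"
    and "x \<noteq> vzero"
    and "q_minimal q x"
  shows "(q x \<in> tangibles \<longrightarrow> card (supp x) \<le> 2) \<and>
         (q x \<in> ghosts \<longrightarrow> card (supp x) \<le> 4)"
proof -
  note ST = assms(1)
  obtain b where b: "sym_bilinear b" "\<forall>x\<in>free_mod. \<forall>y\<in>free_mod. q (vadd x y) = q x + q y + b x y"
    using assms(2) unfolding quadratic_form_def by blast
  define S where "S = supp x"
  have finS: "finite S" using assms(3) unfolding free_mod_def supp_def S_def by simp
  have SS: "S \<noteq> {}" using assms(4) unfolding S_def supp_def vzero_def by auto
  have rS: "restr x S = x" unfolding restr_def S_def supp_def by auto
  define F where "F = qterm q b x"
  have qJ: "\<And>J. finite J \<Longrightarrow> q (restr x J) = sum F (pairs J)"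
    unfolding F_def using q_expand[OF assms(2) b] by blast
  have qx: "q x = sum F (pairs S)" using qJ[OF finS] rS by simp
  have finP: "finite (pairs S)" using pairs_finite[OF finS] .
  have neP: "pairs S \<noteq> {}"
  proof -
    obtain i where "i \<in> S" using SS by blast
    hence "{i} \<in> pairs S" unfolding pairs_def by auto
    thus ?thesis by blast
  qed
  obtain k where k: "k \<in> pairs S" "\<forall>j\<in>pairs S. nle (F j) (F k)"
    using exists_max[OF ST finP neP] by blast
  have kS: "k \<subseteq> S" "card k \<le> 2" using k(1) unfolding pairs_def by auto
  have sub: "\<And>J. J \<subseteq> S \<Longrightarrow> pairs J \<subseteq> pairs S" unfolding pairs_def by auto
  show ?thesis
  proof (cases "\<forall>j\<in>pairs S - {k}. nle (F j) (F k) \<and> ghost_unit * F j \<noteq> ghost_unit * F k")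
    case True
    have q1: "q x = F k" using dom_sum[OF ST finP k(1) True] qx by simp
    have fink: "finite k" using kS finS finite_subset by blast
    have "k \<in> pairs k" using k(1) unfolding pairs_def by auto
    moreover have "\<forall>j\<in>pairs k - {k}. nle (F j) (F k) \<and> ghost_unit * F j \<noteq> ghost_unit * F k"
      using True sub[OF kS(1)] by blast
    ultimately have "q (restr x k) = F k"
      using dom_sum[OF ST pairs_finite[OF fink]] qJ[OF fink] by simp
    hence "card (supp x) \<le> card k" using minimal_card[OF assms(5,3)] kS q1 S_def by simp
    then show ?thesis using kS by simp
  next
    case False
    then obtain l where l: "l \<in> pairs S" "l \<noteq> k" "ghost_unit * F l = ghost_unit * F k"
      using k(2) unfolding nle_def by auto
    have q1: "q x = ghost_unit * F k" using tie_sum[OF ST finP k(1) l(1) l(2)[symmetric] l(3) k(2)] qx by simp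
    have nt: "q x \<notin> tangibles" unfolding tangibles_def q1 by auto
    have lS: "l \<subseteq> S" "card l \<le> 2" using l(1) unfolding pairs_def by auto
    define J where "J = k \<union> l"
    have JS: "J \<subseteq> S" using kS lS J_def by auto
    have finJ: "finite J" using JS finS finite_subset by blast
    have "k \<in> pairs J" "l \<in> pairs J" using k(1) l(1) unfolding pairs_def J_def by auto
    moreover have "\<forall>j\<in>pairs J. nle (F j) (F k)" using k(2) sub[OF JS] by blast
    ultimately have "q (restr x J) = ghost_unit * F k"
      using tie_sum[OF ST pairs_finite[OF finJ], of k l F] l(2,3) qJ[OF finJ] by simp
    hence c: "card (supp x) \<le> card J" using minimal_card[OF assms(5,3)] JS q1 S_def by simp
    have "card J \<le> 4" unfolding J_def using card_Un_le[of k l] kS lS by simp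
    then show ?thesis using nt c by simp
  qed
qed

end
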